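(* If $\boldsymbol x^*$ is a pure Nash equilibrium of $\mathcal L(n,S)$, then for every $y\in S$, \[ \min_{i\in N}d(x_i^*,y)\le\frac{2\Lambda}{n}, \] where $\Lambda=\lambda(S)$.
   Context: Network: $(V,E)$ is a finite connected graph with no vertex of degree $2$; each edge $e$ has a length $\lambda(e)>0$. $S$ is the metric measure space obtained by identifying each edge with a segment of length $\lambda(e)$, with length measure $\lambda$ and shortest-path distance $d$. Location game $\mathcal L(n,S)$ with players $N=\{1,\dots,n\}$: each player chooses a point of $S$. Consumers are distributed according to $\lambda$, and each shops at a closest occupied location. Consumers equidistant from several closest occupied locations are split equally among those locations, and the share of a location is split equally among the players located there. Payoff is the mass of consumers attracted. Nash equilibria are pure. *)

theory Defs
  imports "HOL-Analysis.Analysis"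
begin

text \<open>Vertices of type 'v (set V), edges of type 'e (set E); every
edge e joins src e and tgt e and has length len e > 0. Edges are parametrised from
src e (parameter 0) to tgt e (parameter len e).\<close>

text \<open>Points of the metric space S: either a vertex, or an interior point of an edge
at parameter t with 0 < t < len e. This realises the identification of edge
endpoints with vertices.\<close>
datatype ('v, 'e) point = Vert 'v | Inner 'e real

definition points :: "'v set \<Rightarrow> 'e set \<Rightarrow> ('e \<Rightarrow> real) \<Rightarrow> ('v, 'e) point set" where
  "points V E len = Vert ` V \<union> {Inner e t | e t. e \<in> E \<and> 0 < t \<and> t < len e}"

inductive reach :: "'e set \<Rightarrow> ('e \<Rightarrow> 'v) \<Rightarrow> ('e \<Rightarrow> 'v) \<Rightarrow> ('e \<Rightarrow> real)
    \<Rightarrow> 'v \<Rightarrow> 'v \<Rightarrow> real \<Rightarrow> bool"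
  for E src tgt len where
  reach_refl: "reach E src tgt len u u 0"
| reach_step: "e \<in> E \<Longrightarrow> (a = src e \<and> b = tgt e) \<or> (a = tgt e \<and> b = src e)
     \<Longrightarrow> reach E src tgt len b w L \<Longrightarrow> reach E src tgt len a w (len e + L)"

definition vdist :: "'e set \<Rightarrow> ('e \<Rightarrow> 'v) \<Rightarrow> ('e \<Rightarrow> 'v) \<Rightarrow> ('e \<Rightarrow> real) \<Rightarrow> 'v \<Rightarrow> 'v \<Rightarrow> real" where
  "vdist E src tgt len u w = Inf {L. reach E src tgt len u w L}"

fun ends :: "('e \<Rightarrow> 'v) \<Rightarrow> ('e \<Rightarrow> 'v) \<Rightarrow> ('e \<Rightarrow> real) \<Rightarrow> ('v, 'e) point \<Rightarrow> ('v \<times> real) set" where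
  "ends src tgt len (Vert v) = {(v, 0)}"
| "ends src tgt len (Inner e t) = {(src e, t), (tgt e, len e - t)}"

definition pdist :: "'e set \<Rightarrow> ('e \<Rightarrow> 'v) \<Rightarrow> ('e \<Rightarrow> 'v) \<Rightarrow> ('e \<Rightarrow> real)
    \<Rightarrow> ('v, 'e) point \<Rightarrow> ('v, 'e) point \<Rightarrow> real" where
  "pdist E src tgt len p q = Min
     ({a + vdist E src tgt len u w + b | u a w b. (u, a) \<in> ends src tgt len p \<and> (w, b) \<in> ends src tgt len q}
      \<union> {\<bar>s - t\<bar> | e s t. p = Inner e s \<and> q = Inner e t})"

definition degree :: "'e set \<Rightarrow> ('e \<Rightarrow> 'v) \<Rightarrow> ('e \<Rightarrow> 'v) \<Rightarrow> 'v \<Rightarrow> nat" where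
  "degree E src tgt v = card {e \<in> E. src e = v} + card {e \<in> E. tgt e = v}"

definition network :: "'v set \<Rightarrow> 'e set \<Rightarrow> ('e \<Rightarrow> 'v) \<Rightarrow> ('e \<Rightarrow> 'v) \<Rightarrow> ('e \<Rightarrow> real) \<Rightarrow> bool" where
  "network V E src tgt len \<longleftrightarrow>
     finite V \<and> finite E \<and>
     (\<forall>e\<in>E. src e \<in> V \<and> tgt e \<in> V \<and> src e \<noteq> tgt e \<and> 0 < len e) \<and>
     (\<forall>e\<in>E. \<forall>f\<in>E. {src e, tgt e} = {src f, tgt f} \<longrightarrow> e = f) \<and>
     (\<forall>u\<in>V. \<forall>w\<in>V. \<exists>L. reach E src tgt len u w L) \<and>
     (\<forall>v\<in>V. degree E src tgt v \<noteq> 2)"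

definition total_length :: "'e set \<Rightarrow> ('e \<Rightarrow> real) \<Rightarrow> real" where
  "total_length E len = (\<Sum>e\<in>E. len e)"

text \<open>Players are N = {1..n}; a profile is x :: nat => point.
Closest occupied locations to consumer p:\<close>
definition closest :: "'e set \<Rightarrow> ('e \<Rightarrow> 'v) \<Rightarrow> ('e \<Rightarrow> 'v) \<Rightarrow> ('e \<Rightarrow> real) \<Rightarrow> nat
    \<Rightarrow> (nat \<Rightarrow> ('v, 'e) point) \<Rightarrow> ('v, 'e) point \<Rightarrow> ('v, 'e) point set" where
  "closest E src tgt len n x p =
     {l \<in> x ` {1..n}. \<forall>l' \<in> x ` {1..n}. pdist E src tgt len p l \<le> pdist E src tgt len p l'}"

definition share :: "'e set \<Rightarrow> ('e \<Rightarrow> 'v) \<Rightarrow> ('e \<Rightarrow> 'v) \<Rightarrow> ('e \<Rightarrow> real) \<Rightarrow> nat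
    \<Rightarrow> (nat \<Rightarrow> ('v, 'e) point) \<Rightarrow> nat \<Rightarrow> ('v, 'e) point \<Rightarrow> real" where
  "share E src tgt len n x i p =
     (if x i \<in> closest E src tgt len n x p
      then 1 / (real (card (closest E src tgt len n x p)) * real (card {j \<in> {1..n}. x j = x i}))
      else 0)"

text \<open>Payoff: mass (w.r.t. length measure) of consumers attracted by player i.
Vertices have measure zero, so the measure is the sum over edges of the
Lebesgue integral along the edge.\<close>
definition payoff :: "'e set \<Rightarrow> ('e \<Rightarrow> 'v) \<Rightarrow> ('e \<Rightarrow> 'v) \<Rightarrow> ('e \<Rightarrow> real) \<Rightarrow> nat
    \<Rightarrow> (nat \<Rightarrow> ('v, 'e) point) \<Rightarrow> nat \<Rightarrow> real" where
  "payoff E src tgt len n x i =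
     (\<Sum>e\<in>E. LBINT t=0..len e. share E src tgt len n x i (Inner e t))"

definition nash_eq :: "'v set \<Rightarrow> 'e set \<Rightarrow> ('e \<Rightarrow> 'v) \<Rightarrow> ('e \<Rightarrow> 'v) \<Rightarrow> ('e \<Rightarrow> real) \<Rightarrow> nat
    \<Rightarrow> (nat \<Rightarrow> ('v, 'e) point) \<Rightarrow> bool" where
  "nash_eq V E src tgt len n x \<longleftrightarrow>
     (\<forall>i\<in>{1..n}. x i \<in> points V E len) \<and>
     (\<forall>i\<in>{1..n}. \<forall>y\<in>points V E len.
        payoff E src tgt len n (x(i := y)) i \<le> payoff E src tgt len n x i)"

end

theory Submission
  imports Defs
begin

definition joins :: "('e \<Rightarrow> 'v) \<Rightarrow> ('e \<Rightarrow> 'v) \<Rightarrow> 'e \<Rightarrow> 'v \<Rightarrow> 'v \<Rightarrow> bool" where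
  "joins src tgt e a b \<longleftrightarrow> (a = src e \<and> b = tgt e) \<or> (a = tgt e \<and> b = src e)"

locale net =
  fixes V :: "'v set" and E :: "'e set" and src tgt :: "'e \<Rightarrow> 'v" and len :: "'e \<Rightarrow> real"
  assumes nw: "network V E src tgt len"
begin

abbreviation "R \<equiv> reach E src tgt len"
abbreviation "vd \<equiv> vdist E src tgt len"
abbreviation "d \<equiv> pdist E src tgt len"

lemma finV: "finite V" and finE: "finite E"
  and edge_ok: "e \<in> E \<Longrightarrow> src e \<in> V \<and> tgt e \<in> V \<and> src e \<noteq> tgt e \<and> 0 < len e"
  and conn: "u \<in> V \<Longrightarrow> w \<in> V \<Longrightarrow> \<exists>L. R u w L"
  using nw unfolding network_def by auto

lemma reach_nonneg: "R a b L \<Longrightarrow> 0 \<le> L"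
  by (induction rule: reach.induct) (auto dest: edge_ok)

lemma reach_trans: "R a b L1 \<Longrightarrow> R b c L2 \<Longrightarrow> R a c (L1 + L2)"
proof (induction arbitrary: L2 rule: reach.induct)
  case (reach_refl u) then show ?case by simp
next
  case (reach_step e a b w L)
  then have "R a c (len e + (L + L2))" by (intro reach.reach_step) auto
  then show ?case by (simp add: add.assoc)
qed

lemma reach_edge: "e \<in> E \<Longrightarrow> joins src tgt e a b \<Longrightarrow> R a b (len e)"
proof -
  assume "e \<in> E" "joins src tgt e a b"
  then have "R a b (len e + 0)"
    by (intro reach.reach_step) (auto simp: joins_def intro: reach.reach_refl)
  then show ?thesis by simp
qed

lemma reach_sym: "R a b L \<Longrightarrow> R b a L"
proof (induction rule: reach.induct)
  case (reach_refl u) then show ?case by (rule reach.reach_refl)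
next
  case (reach_step e a b w L)
  have "R b a (len e)" using reach_step by (intro reach_edge) (auto simp: joins_def)
  from reach_trans[OF reach_step.IH this] show ?case by (simp add: add.commute)
qed

lemma bdd: "bdd_below {L. R u w L}"
  by (rule bdd_belowI[of _ 0]) (auto dest: reach_nonneg)

lemma vd_le: "R u w L \<Longrightarrow> vd u w \<le> L"
  unfolding vdist_def by (rule cInf_lower) (auto simp: bdd)

lemma vd_ge: "u \<in> V \<Longrightarrow> w \<in> V \<Longrightarrow> (\<And>L. R u w L \<Longrightarrow> c \<le> L) \<Longrightarrow> c \<le> vd u w"
  unfolding vdist_def using conn[of u w] by (intro cInf_greatest) auto

lemma vd_nonneg: "u \<in> V \<Longrightarrow> w \<in> V \<Longrightarrow> 0 \<le> vd u w"
  by (rule vd_ge) (auto dest: reach_nonneg)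

lemma vd_refl: "u \<in> V \<Longrightarrow> vd u u = 0"
  using vd_le[OF reach.reach_refl, of u] vd_nonneg[of u u] by auto

lemma vd_sym: "vd u w = vd w u"
proof -
  have "Collect (R u w) = Collect (R w u)" by (auto intro: reach_sym)
  then show ?thesis unfolding vdist_def by simp
qed

lemma vd_tri: "u \<in> V \<Longrightarrow> v \<in> V \<Longrightarrow> w \<in> V \<Longrightarrow> vd u w \<le> vd u v + vd v w"
proof -
  assume V: "u \<in> V" "v \<in> V" "w \<in> V"
  have "vd u w - vd v w \<le> vd u v"
  proof (rule vd_ge[OF V(1,2)])
    fix L1 assume L1: "R u v L1"
    have "vd u w - L1 \<le> vd v w"
    proof (rule vd_ge[OF V(2,3)])
      fix L2 assume "R v w L2"
      from vd_le[OF reach_trans[OF L1 this]] show "vd u w - L1 \<le> L2" by simp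
    qed
    then show "vd u w - vd v w \<le> L1" by simp
  qed
  then show ?thesis by simp
qed

lemma vd_edge: "e \<in> E \<Longrightarrow> joins src tgt e a b \<Longrightarrow> vd a b \<le> len e"
  by (rule vd_le[OF reach_edge])

lemma vd_bellman:
  assumes "v \<in> V" "w \<in> V" "v \<noteq> w"
  shows "\<exists>e\<in>E. \<exists>c. joins src tgt e v c \<and> vd v w = len e + vd c w"
proof -
  define oth where "oth e = (if src e = v then tgt e else src e)" for e
  define A where "A = {e\<in>E. src e = v \<or> tgt e = v}"
  define M where "M = (\<lambda>e. len e + vd (oth e) w) ` A"
  have jo: "e \<in> A \<Longrightarrow> joins src tgt e v (oth e)" for e
    unfolding A_def oth_def joins_def using edge_ok[of e] by auto
  have othV: "e \<in> A \<Longrightarrow> oth e \<in> V" for e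
    unfolding A_def oth_def using edge_ok[of e] by auto
  have fin: "finite M" unfolding M_def A_def using finE by auto
  obtain L where L: "R v w L" using conn assms by blast
  have A_ne: "A \<noteq> {}"
    using L assms(3) by (cases rule: reach.cases) (auto simp: A_def)
  then have Mne: "M \<noteq> {}" unfolding M_def by auto
  have "Min M \<in> M" using fin Mne by simp
  then obtain e where e: "e \<in> A" "Min M = len e + vd (oth e) w" unfolding M_def by auto
  have "vd v w \<le> vd v (oth e) + vd (oth e) w" using vd_tri[OF assms(1) othV[OF e(1)] assms(2)] .
  also have "\<dots> \<le> len e + vd (oth e) w" using vd_edge[OF _ jo[OF e(1)]] e(1) by (auto simp: A_def)
  finally have le: "vd v w \<le> Min M" using e by simp
  have ge: "Min M \<le> vd v w"
  proof (rule vd_ge[OF assms(1,2)])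
    fix L assume "R v w L"
    then show "Min M \<le> L"
    proof (cases rule: reach.cases)
      case reach_refl then show ?thesis using assms(3) by simp
    next
      case (reach_step e' b L')
      have e'A: "e' \<in> A" using reach_step by (auto simp: A_def)
      have b: "b = oth e'" using reach_step edge_ok[of e'] by (auto simp: oth_def)
      have "Min M \<le> len e' + vd (oth e') w" using fin e'A unfolding M_def by (intro Min_le) auto
      also have "\<dots> \<le> len e' + L'" using vd_le[of b w L'] reach_step b by simp
      finally show ?thesis using reach_step by simp
    qed
  qed
  show ?thesis using le ge e jo[OF e(1)] A_def by (intro bexI[of _ e]) (auto simp: A_def)
qed

definition valid :: "('v, 'e) point \<Rightarrow> bool" where
  "valid p = (case p of Vert v \<Rightarrow> v \<in> V | Inner e t \<Rightarrow> e \<in> E \<and> 0 \<le> t \<and> t \<le> len e)"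

lemma points_valid: "p \<in> points V E len \<Longrightarrow> valid p"
  unfolding points_def valid_def by auto

lemma valid_ends: "valid p \<Longrightarrow> (u, a) \<in> ends src tgt len p \<Longrightarrow> u \<in> V \<and> 0 \<le> a"
  by (cases p) (auto simp: valid_def dest: edge_ok)

definition PS where "PS p q =
  {a + vd u w + b | u a w b. (u, a) \<in> ends src tgt len p \<and> (w, b) \<in> ends src tgt len q}
      \<union> {\<bar>s - t\<bar> | e s t. p = Inner e s \<and> q = Inner e t}"

lemma d_def': "d p q = Min (PS p q)" unfolding pdist_def PS_def ..

lemma ends_fin: "finite (ends src tgt len p)" by (cases p) auto
lemma ends_ne: "ends src tgt len p \<noteq> {}" by (cases p) auto

lemma PS_fin: "finite (PS p q)"
proof -
  have "{a + vd u w + b | u a w b. (u, a) \<in> ends src tgt len p \<and> (w, b) \<in> ends src tgt len q}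
     = (\<lambda>((u,a),(w,b)). a + vd u w + b) ` (ends src tgt len p \<times> ends src tgt len q)"
    by force
  moreover have "{\<bar>s - t\<bar> | e s t. p = Inner e s \<and> q = Inner e t}
     \<subseteq> (case p of Inner e s \<Rightarrow> (case q of Inner e' t \<Rightarrow> {\<bar>s - t\<bar>} | _ \<Rightarrow> {}) | _ \<Rightarrow> {})"
    by auto
  moreover have "finite (case p of Inner e s \<Rightarrow> (case q of Inner e' t \<Rightarrow> {\<bar>s - t\<bar>} | _ \<Rightarrow> {}) | _ \<Rightarrow> {})"
    by (auto split: point.splits)
  ultimately show ?thesis unfolding PS_def using ends_fin
    by (metis (no_types, lifting) finite_Un finite_SigmaI finite_imageI finite_subset)
qed

lemma PS_ne: "PS p q \<noteq> {}"
  using ends_ne[of p] ends_ne[of q] unfolding PS_def by fast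

lemma d_le1: "(u, a) \<in> ends src tgt len p \<Longrightarrow> (w, b) \<in> ends src tgt len q \<Longrightarrow> d p q \<le> a + vd u w + b"
  unfolding d_def' by (rule Min_le[OF PS_fin]) (auto simp: PS_def)

lemma d_le2: "d (Inner e s) (Inner e t) \<le> \<bar>s - t\<bar>"
  unfolding d_def' by (rule Min_le[OF PS_fin]) (auto simp: PS_def)

lemma d_cases:
  obtains u a w b where "(u, a) \<in> ends src tgt len p" "(w, b) \<in> ends src tgt len q" "d p q = a + vd u w + b"
  | e s t where "p = Inner e s" "q = Inner e t" "d p q = \<bar>s - t\<bar>"
proof -
  have "d p q \<in> PS p q" unfolding d_def' using PS_fin PS_ne by simp
  then show ?thesis using that unfolding PS_def by blast
qed

lemma d_sym: "d p q = d q p"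
proof -
  have "PS p q = PS q p" unfolding PS_def
    by (auto simp: vd_sym; metis (no_types, opaque_lifting) abs_minus_commute add.commute vd_sym)+
  then show ?thesis unfolding d_def' by simp
qed

lemma ends_link:
  assumes "valid q" "(w, b) \<in> ends src tgt len q" "(w', b') \<in> ends src tgt len q"
  shows "vd w w' \<le> b + b'"
proof (cases q)
  case (Vert v) then show ?thesis using assms by (auto simp: valid_def vd_refl)
next
  case (Inner e s)
  have e: "e \<in> E" "0 \<le> s" "s \<le> len e" using assms Inner by (auto simp: valid_def)
  have j1: "joins src tgt e (src e) (tgt e)" "joins src tgt e (tgt e) (src e)" by (auto simp: joins_def)
  show ?thesis using assms(2,3) Inner e vd_edge[OF e(1) j1(1)] vd_edge[OF e(1) j1(2)]
      edge_ok[OF e(1)] vd_refl[of "src e"] vd_refl[of "tgt e"]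
    by auto
qed

lemma shift:
  assumes "(w, b) \<in> ends src tgt len (Inner e t)"
  shows "\<exists>b'. (w, b') \<in> ends src tgt len (Inner e s) \<and> b' \<le> \<bar>s - t\<bar> + b"
  using assms by auto

lemma d_tri:
  assumes "valid p" "valid q" "valid r"
  shows "d p r \<le> d p q + d q r"
proof -
  have vV: "\<And>z u a. valid z \<Longrightarrow> (u, a) \<in> ends src tgt len z \<Longrightarrow> u \<in> V" using valid_ends by blast
  show ?thesis
  proof (cases p q rule: d_cases)
    case (1 u a w b)
    note pq = 1
    show ?thesis
    proof (cases q r rule: d_cases)
      case (1 w' b' z c)
      have "vd u z \<le> vd u w + vd w z" using vd_tri vV assms pq 1 by meson
      also have "vd w z \<le> vd w w' + vd w' z" using vd_tri vV assms pq 1 by meson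
      finally have "vd u z \<le> vd u w + b + b' + vd w' z"
        using ends_link[OF assms(2) pq(2) 1(1)] by simp
      moreover have "d p r \<le> a + vd u z + c" using d_le1[OF pq(1) 1(2)] .
      ultimately show ?thesis using pq 1 by simp
    next
      case (2 e t u')
      obtain b'' where b'': "(w, b'') \<in> ends src tgt len r" "b'' \<le> \<bar>u' - t\<bar> + b"
        using shift[of w b e t u'] pq(2) 2 by auto
      have "d p r \<le> a + vd u w + b''" using d_le1[OF pq(1) b''(1)] .
      then show ?thesis using pq 2 b'' by (simp add: abs_minus_commute)
    qed
  next
    case (2 e s t)
    note pq = 2
    show ?thesis
    proof (cases q r rule: d_cases)
      case (1 w b z c)
      obtain b'' where b'': "(w, b'') \<in> ends src tgt len p" "b'' \<le> \<bar>s - t\<bar> + b"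
        using shift[of w b e t s] pq 1 by auto
      have "d p r \<le> b'' + vd w z + c" using d_le1[OF b''(1) 1(2)] .
      then show ?thesis using pq 1 b'' by simp
    next
      case (2 e' t' u')
      then have "e' = e" "t' = t" using pq by auto
      then have "d p r \<le> \<bar>s - u'\<bar>" using d_le2 pq 2 by simp
      then show ?thesis using pq 2 \<open>t' = t\<close> by simp
    qed
  qed
qed

lemma d_nonneg: "valid p \<Longrightarrow> valid q \<Longrightarrow> 0 \<le> d p q"
  apply (cases p q rule: d_cases)
  using valid_ends vd_nonneg by (auto intro!: add_nonneg_nonneg)

lemma d_self: "valid p \<Longrightarrow> d p p = 0"
proof -
  assume v: "valid p"
  have "d p p \<le> 0"
  proof (cases p)
    case (Vert x1)
    then show ?thesis using d_le1[of x1 0 p x1 0 p] v vd_refl by (auto simp: valid_def)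
  next
    case (Inner e s)
    then show ?thesis using d_le2[of e s s] by simp
  qed
  then show ?thesis using d_nonneg[OF v v] by simp
qed

end


definition clamp :: "real \<Rightarrow> real \<Rightarrow> real" where "clamp L t = max 0 (min L t)"

lemma clamp_lip: "\<bar>clamp L t - clamp L t'\<bar> \<le> \<bar>t - t'\<bar>"
  unfolding clamp_def by (simp add: max_def min_def abs_if)

lemma clamp_in: "0 \<le> L \<Longrightarrow> 0 \<le> clamp L t \<and> clamp L t \<le> L"
  unfolding clamp_def by auto

lemma clamp_id: "0 \<le> t \<Longrightarrow> t \<le> L \<Longrightarrow> clamp L t = t"
  unfolding clamp_def by auto

context net
begin

lemma d_lip:
  assumes "valid l" "e \<in> E" "0 \<le> a" "a \<le> len e" "0 \<le> b" "b \<le> len e"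
  shows "\<bar>d (Inner e a) l - d (Inner e b) l\<bar> \<le> \<bar>a - b\<bar>"
proof -
  have va: "valid (Inner e a)" and vb: "valid (Inner e b)" using assms by (auto simp: valid_def)
  have 1: "d (Inner e a) l \<le> \<bar>a - b\<bar> + d (Inner e b) l"
    using d_tri[OF va vb assms(1)] d_le2[of e a b] by simp
  have 2: "d (Inner e b) l \<le> \<bar>a - b\<bar> + d (Inner e a) l"
    using d_tri[OF vb va assms(1)] d_le2[of e b a] by (simp add: abs_minus_commute)
  show ?thesis using 1 2 by linarith
qed

lemma dl_meas:
  assumes "valid l" "e \<in> E"
  shows "(\<lambda>t. d (Inner e (clamp (len e) t)) l) \<in> borel_measurable lborel"
proof -
  have L0: "0 \<le> len e" using edge_ok[OF assms(2)] by simp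
  have "1-lipschitz_on UNIV (\<lambda>t. d (Inner e (clamp (len e) t)) l)"
  proof (rule lipschitz_onI)
    fix t t' :: real
    have "\<bar>d (Inner e (clamp (len e) t)) l - d (Inner e (clamp (len e) t')) l\<bar> \<le>
        \<bar>clamp (len e) t - clamp (len e) t'\<bar>"
      using clamp_in[OF L0, of t] clamp_in[OF L0, of t'] by (intro d_lip assms) auto
    also have "\<dots> \<le> \<bar>t - t'\<bar>" by (rule clamp_lip)
    finally show "dist (d (Inner e (clamp (len e) t)) l) (d (Inner e (clamp (len e) t')) l) \<le> 1 * dist t t'"
      by (simp add: dist_real_def)
  qed simp
  then have "continuous_on UNIV (\<lambda>t. d (Inner e (clamp (len e) t)) l)"
    by (rule lipschitz_on_continuous_on)
  then show ?thesis by (simp add: borel_measurable_continuous_onI)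
qed

end

lemma mm1: "(0::real) < L \<Longrightarrow> 0 \<le> min L (max 0 x) \<and> min L (max 0 x) \<le> L" by auto
lemma mm2: "(0::real) < min L (max 0 (r - c)) \<Longrightarrow> c + min L (max 0 (r - c)) \<le> r"
  by (auto simp: min_def max_def split: if_split_asm)
lemma mm2': "m = min L (max 0 (r - c)) \<Longrightarrow> 0 < m \<Longrightarrow> c + m \<le> (r::real)"
  using mm2 by blast
lemma mm3: "0 \<le> L \<Longrightarrow> min (L + c) r \<le> min L (max 0 (r - c)) + min c (r::real)" by (auto simp: min_def max_def)

locale ball = net V E src tgt len
  for V :: "'v set" and E :: "'e set" and src tgt :: "'e \<Rightarrow> 'v" and len :: "'e \<Rightarrow> real" +
  fixes y :: "('v, 'e) point" and \<rho> :: real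
  assumes yP: "y \<in> points V E len" and rho: "0 < \<rho>"
begin

definition D where "D v = d (Vert v) y"

lemma yv: "valid y" using points_valid yP .

lemma D_nonneg: "v \<in> V \<Longrightarrow> 0 \<le> D v"
  unfolding D_def using d_nonneg yv by (auto simp: valid_def)

lemma D_end: "(w, b) \<in> ends src tgt len y \<Longrightarrow> D w \<le> b"
  unfolding D_def using d_le1[of w 0 "Vert w" w b y] vd_refl valid_ends[OF yv] by auto

lemma edge_bound:
  assumes "e \<in> E" "0 \<le> t" "t \<le> len e"
  shows "d (Inner e t) y \<le> t + D (src e)" "d (Inner e t) y \<le> (len e - t) + D (tgt e)"
proof -
  have v: "valid (Inner e t)" using assms by (auto simp: valid_def)
  have s: "valid (Vert (src e))" "valid (Vert (tgt e))" using edge_ok[OF assms(1)] by (auto simp: valid_def)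
  have "d (Inner e t) (Vert (src e)) \<le> t + vd (src e) (src e) + 0" by (rule d_le1) auto
  then show "d (Inner e t) y \<le> t + D (src e)"
    using d_tri[OF v s(1) yv] vd_refl edge_ok[OF assms(1)] unfolding D_def by auto
  have "d (Inner e t) (Vert (tgt e)) \<le> (len e - t) + vd (tgt e) (tgt e) + 0" by (rule d_le1) auto
  then show "d (Inner e t) y \<le> (len e - t) + D (tgt e)"
    using d_tri[OF v s(2) yv] vd_refl edge_ok[OF assms(1)] unfolding D_def by auto
qed

lemma D_bellman:
  assumes "v \<in> V"
  shows "(\<exists>b. (v, b) \<in> ends src tgt len y \<and> D v = b) \<or> (\<exists>e\<in>E. \<exists>c. joins src tgt e v c \<and> D v = len e + D c)"
proof (cases "Vert v :: ('v, 'e) point" y rule: d_cases)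
  case (1 u a w b)
  then have u: "u = v" "a = 0" by auto
  have wV: "w \<in> V" using valid_ends[OF yv 1(2)] by simp
  show ?thesis
  proof (cases "v = w")
    case True then show ?thesis using 1 u vd_refl[OF assms] unfolding D_def by auto
  next
    case False
    obtain e c where e: "e \<in> E" "joins src tgt e v c" "vd v w = len e + vd c w"
      using vd_bellman[OF assms wV False] by blast
    have cV: "c \<in> V" using e edge_ok[OF e(1)] by (auto simp: joins_def)
    have "D c \<le> 0 + vd c w + b" unfolding D_def by (rule d_le1) (use 1 in auto)
    then have ge: "len e + D c \<le> D v" using 1 u e unfolding D_def by simp
    have vc: "valid (Vert v)" "valid (Vert c)" using assms cV by (auto simp: valid_def)
    have "d (Vert v) (Vert c) \<le> 0 + vd v c + 0" by (rule d_le1) auto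
    then have "D v \<le> len e + D c" using d_tri[OF vc yv] vd_edge[OF e(1,2)] unfolding D_def by simp
    then show ?thesis using ge e by auto
  qed
next
  case (2 e s t) then show ?thesis by simp
qed

definition good where "good e l \<longleftrightarrow> 0 \<le> l \<and> (\<exists>a. 0 \<le> a \<and> a + l \<le> len e \<and>
   (\<forall>t. a < t \<and> t < a + l \<longrightarrow> d (Inner e t) y < \<rho>))"

definition isY where "isY e \<longleftrightarrow> (\<exists>s. y = Inner e s)"

definition inv where "inv v F \<longleftrightarrow> (\<forall>e\<in>F. isY e \<or> (D (src e) \<le> D v \<and> D (tgt e) \<le> D v \<and>
   (src e = v \<longrightarrow> D (tgt e) = D v - len e) \<and> (tgt e = v \<longrightarrow> D (src e) = D v - len e)))"

lemma chain:
  "v \<in> V \<Longrightarrow> \<exists>F l. F \<subseteq> E \<and> (\<forall>e\<in>F. good e (l e)) \<and> inv v F \<and> min (D v) \<rho> \<le> (\<Sum>e\<in>F. l e)"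
proof (induction v rule: measure_induct_rule[where f = "\<lambda>v. card {w\<in>V. D w < D v}"])
  case (less v)
  show ?case
  proof (cases "\<exists>b. (v, b) \<in> ends src tgt len y \<and> D v = b")
    case True
    then obtain b where b: "(v, b) \<in> ends src tgt len y" "D v = b" by blast
    show ?thesis
    proof (cases y)
      case (Vert u)
      then have "D v = 0" using b by simp
      then show ?thesis by (intro exI[of _ "{}"]) (auto simp: inv_def)
    next
      case (Inner e0 s)
      then have e0: "e0 \<in> E" "0 < s" "s < len e0" using yP by (auto simp: points_def)
      have iy: "isY e0" unfolding isY_def using Inner by blast
      have gd: "good e0 (min b \<rho>)"
      proof -
        have bb: "(v = src e0 \<and> b = s) \<or> (v = tgt e0 \<and> b = len e0 - s)" using b Inner by auto
        have near: "\<And>t. \<bar>t - s\<bar> < \<rho> \<Longrightarrow> d (Inner e0 t) y < \<rho>"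
        proof -
          fix t assume "\<bar>t - s\<bar> < \<rho>"
          then show "d (Inner e0 t) y < \<rho>" using d_le2[of e0 t s] Inner by simp
        qed
        show ?thesis
        proof (cases "v = src e0 \<and> b = s")
          case True
          show ?thesis unfolding good_def using True e0 rho
            by (intro conjI exI[of _ "s - min b \<rho>"]) (auto intro!: near)
        next
          case False
          then have "b = len e0 - s" using bb by auto
          then show ?thesis unfolding good_def using e0 rho
            by (intro conjI exI[of _ "s"]) (auto intro!: near)
        qed
      qed
      show ?thesis using e0 iy gd b
        by (intro exI[of _ "{e0}"] exI[of _ "\<lambda>_. min b \<rho>"]) (auto simp: inv_def)
    qed
  next
    case False
    then obtain e c where e: "e \<in> E" "joins src tgt e v c" "D v = len e + D c"
      using D_bellman[OF less.prems] by blast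
    have cV: "c \<in> V" using e edge_ok[OF e(1)] by (auto simp: joins_def)
    have lpos: "0 < len e" using edge_ok[OF e(1)] by simp
    have Dc: "D c < D v" using e lpos by simp
    have "{w\<in>V. D w < D c} \<subset> {w\<in>V. D w < D v}" using Dc cV by auto
    then have "card {w\<in>V. D w < D c} < card {w\<in>V. D w < D v}"
      using finV by (intro psubset_card_mono) auto
    then obtain F l where F: "F \<subseteq> E" "\<forall>e\<in>F. good e (l e)" "inv c F" "min (D c) \<rho> \<le> (\<Sum>e\<in>F. l e)"
      using less.IH cV by blast
    have nF: "e \<notin> F"
    proof
      assume eF: "e \<in> F"
      show False
      proof (cases "isY e")
        case True
        then obtain s where s: "y = Inner e s" by (auto simp: isY_def)
        then have s': "0 < s" "s < len e" using yP by (auto simp: points_def)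
        have "D (src e) \<le> s" "D (tgt e) \<le> len e - s" using D_end s by auto
        moreover have "0 \<le> D c" using D_nonneg cV by simp
        ultimately show False using e(2,3) s' by (auto simp: joins_def)
      next
        case False
        then have "D (src e) \<le> D c" "D (tgt e) \<le> D c" using F(3) eF by (auto simp: inv_def)
        then show False using e(2) Dc by (auto simp: joins_def)
      qed
    qed
    define m where "m = min (len e) (max 0 (\<rho> - D c))"
    have m1': "0 \<le> m \<and> m \<le> len e" unfolding m_def by (rule mm1[OF lpos])
    have m1: "0 \<le> m" "m \<le> len e" using m1' by blast+
    have m2: "0 < m \<Longrightarrow> D c + m \<le> \<rho>" by (rule mm2'[OF m_def])
    have gm: "good e m"
    proof (cases "c = src e")
      case True
      show ?thesis unfolding good_def
      proof (intro conjI exI[of _ 0] allI impI)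
        fix t assume t: "0 < t \<and> t < 0 + m"
        then have "d (Inner e t) y \<le> t + D (src e)" using edge_bound(1)[OF e(1), of t] m1 by simp
        then show "d (Inner e t) y < \<rho>" using t True m2 by simp
      qed (use m1 in simp_all)
    next
      case False
      then have ct: "c = tgt e" using e(2) by (auto simp: joins_def)
      show ?thesis unfolding good_def
      proof (intro conjI exI[of _ "len e - m"] allI impI)
        fix t assume t: "len e - m < t \<and> t < len e - m + m"
        then have "d (Inner e t) y \<le> (len e - t) + D (tgt e)" using edge_bound(2)[OF e(1), of t] m1 by simp
        then show "d (Inner e t) y < \<rho>" using t ct m2 by simp
      qed (use m1 in simp_all)
    qed
    have inv': "inv v (insert e F)"
      unfolding inv_def
    proof
      fix e' assume "e' \<in> insert e F"
      then consider "e' = e" | "e' \<in> F" by auto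
      then show "isY e' \<or> (D (src e') \<le> D v \<and> D (tgt e') \<le> D v \<and>
        (src e' = v \<longrightarrow> D (tgt e') = D v - len e') \<and> (tgt e' = v \<longrightarrow> D (src e') = D v - len e'))"
      proof cases
        case 1 then show ?thesis using e Dc edge_ok[OF e(1)] by (auto simp: joins_def)
      next
        case 2
        then have "isY e' \<or> (D (src e') \<le> D c \<and> D (tgt e') \<le> D c)" using F(3) by (auto simp: inv_def)
        then show ?thesis using Dc by auto
      qed
    qed
    have "(\<Sum>e'\<in>insert e F. (l(e := m)) e') = m + (\<Sum>e'\<in>F. l e')"
    proof -
      have fF: "finite F" using finite_subset[OF F(1) finE] .
      have "(\<Sum>e'\<in>F. (l(e := m)) e') = (\<Sum>e'\<in>F. l e')"
        by (rule sum.cong) (use nF in auto)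
      then show ?thesis using sum.insert[OF fF nF, of "l(e := m)"] by simp
    qed
    moreover have "min (D v) \<rho> \<le> m + min (D c) \<rho>" unfolding e(3) m_def using lpos by (intro mm3) simp
    ultimately have "min (D v) \<rho> \<le> (\<Sum>e'\<in>insert e F. (l(e := m)) e')" using F(4) by simp
    moreover have "\<forall>e'\<in>insert e F. good e' ((l(e := m)) e')" using F(2) gm nF by auto
    moreover have "insert e F \<subseteq> E" using F(1) e(1) by blast
    ultimately show ?thesis using inv' by blast
  qed
qed

lemma far:
  assumes zv: "valid z" and zd: "2 * \<rho> \<le> d z y"
  shows "\<exists>F l. F \<subseteq> E \<and> (\<forall>e\<in>F. good e (l e)) \<and> \<rho> \<le> (\<Sum>e\<in>F. l e)"
proof -
  obtain w b where wb: "(w, b) \<in> ends src tgt len z" using ends_ne[of z] by auto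
  have wV: "w \<in> V" and b0: "0 \<le> b" using valid_ends[OF zv wb] by auto
  have vw: "valid (Vert w)" using wV by (simp add: valid_def)
  have "d z (Vert w) \<le> b + vd w w + 0" by (rule d_le1[OF wb]) simp
  then have zw: "d z y \<le> b + D w" using d_tri[OF zv vw yv] vd_refl[OF wV] unfolding D_def by simp
  show ?thesis
  proof (cases "\<rho> \<le> D w")
    case True
    then show ?thesis using chain[OF wV] by (metis min.absorb2)
  next
    case False
    then have bgt: "\<rho> < b" using zd zw by simp
    show ?thesis
    proof (cases z)
      case (Vert u) then show ?thesis using wb bgt rho by simp
    next
      case (Inner e1 t)
      then have e1: "e1 \<in> E" "0 \<le> t" "t \<le> len e1" using zv by (auto simp: valid_def)
      have wb': "(w = src e1 \<and> b = t) \<or> (w = tgt e1 \<and> b = len e1 - t)" using wb Inner by auto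
      show ?thesis
      proof (cases "isY e1")
        case True
        then obtain s where s: "y = Inner e1 s" by (auto simp: isY_def)
        then have s': "0 < s" "s < len e1" using yP by (auto simp: points_def)
        have "d z y \<le> \<bar>t - s\<bar>" using d_le2 Inner s by simp
        then have ts: "2 * \<rho> \<le> \<bar>t - s\<bar>" using zd by simp
        have near: "\<And>t'. \<bar>t' - s\<bar> < \<rho> \<Longrightarrow> d (Inner e1 t') y < \<rho>"
        proof -
          fix t' assume "\<bar>t' - s\<bar> < \<rho>"
          then show "d (Inner e1 t') y < \<rho>" using d_le2[of e1 t' s] s by simp
        qed
        have "good e1 \<rho>"
        proof (cases "s < t")
          case True
          show ?thesis unfolding good_def
            by (intro conjI exI[of _ s] allI impI near) (use True ts s' e1 rho in auto)
        next
          case False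
          show ?thesis unfolding good_def
            by (intro conjI exI[of _ "s - \<rho>"] allI impI near) (use False ts s' e1 rho in auto)
        qed
        then show ?thesis using e1 by (intro exI[of _ "{e1}"] exI[of _ "\<lambda>_. \<rho>"]) auto
      next
        case nY: False
        obtain F l where F: "F \<subseteq> E" "\<forall>e\<in>F. good e (l e)" "inv w F" "min (D w) \<rho> \<le> (\<Sum>e\<in>F. l e)"
          using chain[OF wV] by blast
        have lpos: "0 < len e1" using edge_ok[OF e1(1)] by simp
        have sne: "src e1 \<noteq> tgt e1" using edge_ok[OF e1(1)] by simp
        define m where "m = \<rho> - D w"
        have m: "0 < m" "m < b" using False bgt D_nonneg[OF wV] by (auto simp: m_def)
        have nF: "e1 \<notin> F"
        proof
          assume "e1 \<in> F"
          then have I: "(src e1 = w \<longrightarrow> D (tgt e1) = D w - len e1) \<and> (tgt e1 = w \<longrightarrow> D (src e1) = D w - len e1)"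
            using F(3) nY by (auto simp: inv_def)
          from wb' show False
          proof
            assume a: "w = src e1 \<and> b = t"
            have "d z y \<le> (len e1 - t) + D (tgt e1)" using edge_bound(2)[OF e1] Inner by simp
            then show False using I a zd False rho b0 by simp
          next
            assume a: "w = tgt e1 \<and> b = len e1 - t"
            have "d z y \<le> t + D (src e1)" using edge_bound(1)[OF e1] Inner by simp
            then show False using I a zd False rho b0 by simp
          qed
        qed
        have gm: "good e1 m"
          using wb'
        proof
          assume a: "w = src e1 \<and> b = t"
          show ?thesis unfolding good_def
          proof (intro conjI exI[of _ 0] allI impI)
            fix t' assume t': "0 < t' \<and> t' < 0 + m"
            then have "d (Inner e1 t') y \<le> t' + D (src e1)" using edge_bound(1)[OF e1(1), of t'] m a e1 by simp
            then show "d (Inner e1 t') y < \<rho>" using t' a m_def by simp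
          qed (use m a e1 in simp_all)
        next
          assume a: "w = tgt e1 \<and> b = len e1 - t"
          show ?thesis unfolding good_def
          proof (intro conjI exI[of _ "len e1 - m"] allI impI)
            fix t' assume t': "len e1 - m < t' \<and> t' < len e1 - m + m"
            then have "d (Inner e1 t') y \<le> (len e1 - t') + D (tgt e1)"
              using edge_bound(2)[OF e1(1), of t'] m a e1 by simp
            then show "d (Inner e1 t') y < \<rho>" using t' a m_def by simp
          qed (use m a e1 in simp_all)
        qed
        have fF: "finite F" using finite_subset[OF F(1) finE] .
        have "(\<Sum>e'\<in>F. (l(e1 := m)) e') = (\<Sum>e'\<in>F. l e')"
          by (rule sum.cong) (use nF in auto)
        then have sm: "(\<Sum>e'\<in>insert e1 F. (l(e1 := m)) e') = m + (\<Sum>e'\<in>F. l e')"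
          using sum.insert[OF fF nF, of "l(e1 := m)"] by simp
        have "min (D w) \<rho> = D w" using False by simp
        then have "\<rho> \<le> (\<Sum>e'\<in>insert e1 F. (l(e1 := m)) e')" using sm F(4) m_def by simp
        moreover have "\<forall>e'\<in>insert e1 F. good e' ((l(e1 := m)) e')" using F(2) gm nF by auto
        moreover have "insert e1 F \<subseteq> E" using F(1) e1(1) by blast
        ultimately show ?thesis by blast
      qed
    qed
  qed
qed

end

locale game = net V E src tgt len
  for V :: "'v set" and E :: "'e set" and src tgt :: "'e \<Rightarrow> 'v" and len :: "'e \<Rightarrow> real" +
  fixes n :: nat and x :: "nat \<Rightarrow> ('v, 'e) point"
  assumes n1: "1 \<le> n" and xP: "\<And>i. i \<in> {1..n} \<Longrightarrow> x i \<in> points V E len"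
begin

abbreviation "Lc \<equiv> x ` {1..n}"
abbreviation "cl \<equiv> closest E src tgt len n x"
abbreviation "sh \<equiv> share E src tgt len n x"

lemma Lc_fin: "finite Lc" by simp
lemma Lc_ne: "Lc \<noteq> {}" using n1 by auto
lemma Lc_valid: "l \<in> Lc \<Longrightarrow> valid l" using xP points_valid by auto

lemma cl_sub: "cl p \<subseteq> Lc" unfolding closest_def by auto

lemma cl_ne: "cl p \<noteq> {}"
proof -
  have "Min (d p ` Lc) \<in> d p ` Lc" using Lc_ne by simp
  then obtain l where l: "l \<in> Lc" "d p l = Min (d p ` Lc)" by (metis (no_types, lifting) imageE)
  have "\<forall>l'\<in>Lc. d p l \<le> d p l'" using l(2) by simp
  then have "l \<in> cl p" using l(1) unfolding closest_def by blast
  then show ?thesis by auto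
qed

lemma cl_fin: "finite (cl p)" using finite_subset[OF cl_sub] by simp

lemma sh_nonneg: "0 \<le> sh i p" unfolding share_def by simp

lemma sh_le1: "sh i p \<le> 1"
proof -
  have "1 / (real a * real b) \<le> 1" for a b :: nat
  proof (cases "a = 0 \<or> b = 0")
    case False
    then have "1 \<le> a * b" by (simp add: Suc_le_eq)
    then have "1 \<le> real a * real b" by (metis of_nat_1 of_nat_le_iff of_nat_mult)
    then show ?thesis by simp
  qed auto
  then show ?thesis unfolding share_def by simp
qed

lemma sh_sum: "(\<Sum>i\<in>{1..n}. sh i p) = 1"
proof -
  let ?C = "cl p"
  have cC: "card ?C \<noteq> 0" using cl_ne cl_fin by simp
  have inner: "(\<Sum>i\<in>{j \<in> {1..n}. x j = l}. sh i p) = (if l \<in> ?C then 1 / real (card ?C) else 0)"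
    if l: "l \<in> Lc" for l
  proof -
    let ?G = "{j \<in> {1..n}. x j = l}"
    have Gne: "card ?G \<noteq> 0" using l by auto
    have "(\<Sum>i\<in>?G. sh i p) = (\<Sum>i\<in>?G. (if l \<in> ?C then 1 / (real (card ?C) * real (card ?G)) else 0))"
      by (rule sum.cong) (auto simp: share_def)
    also have "\<dots> = real (card ?G) * (if l \<in> ?C then 1 / (real (card ?C) * real (card ?G)) else 0)"
      by simp
    also have "\<dots> = (if l \<in> ?C then 1 / real (card ?C) else 0)" using Gne by simp
    finally show ?thesis .
  qed
  have "(\<Sum>i\<in>{1..n}. sh i p) = (\<Sum>l\<in>Lc. \<Sum>i\<in>{j \<in> {1..n}. x j = l}. sh i p)"
    by (rule sum.image_gen) simp
  also have "\<dots> = (\<Sum>l\<in>Lc. if l \<in> ?C then 1 / real (card ?C) else 0)"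
    by (rule sum.cong[OF refl]) (rule inner)
  also have "\<dots> = (\<Sum>l\<in>{l \<in> Lc. l \<in> ?C}. 1 / real (card ?C))"
    by (rule sum.inter_filter[symmetric]) simp
  also have "{l \<in> Lc. l \<in> ?C} = ?C" using cl_sub by auto
  also have "(\<Sum>l\<in>?C. 1 / real (card ?C)) = 1" using cC by simp
  finally show ?thesis .
qed

lemma sh_meas:
  assumes i: "i \<in> {1..n}" and e: "e \<in> E"
  shows "(\<lambda>t. sh i (Inner e (clamp (len e) t))) \<in> borel_measurable lborel"
proof -
  define dl where "dl l t = d (Inner e (clamp (len e) t)) l" for l t
  have dlm: "dl l \<in> borel_measurable borel" if "l \<in> Lc" for l
    using dl_meas[OF Lc_valid[OF that] e] unfolding dl_def by simp
  define mu where "mu t = Min ((\<lambda>l. dl l t) ` Lc)" for t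
  have mum: "mu \<in> borel_measurable borel" unfolding mu_def
    by (rule borel_measurable_Min[OF Lc_fin dlm])
  define cnt where "cnt t = (\<Sum>l\<in>Lc. if dl l t \<le> mu t then 1 else (0::real))" for t
  have cntm: "cnt \<in> borel_measurable borel" unfolding cnt_def
  proof (rule borel_measurable_sum)
    fix l assume "l \<in> Lc"
    note [measurable] = dlm[OF this] mum
    show "(\<lambda>t. if dl l t \<le> mu t then 1 else (0::real)) \<in> borel_measurable borel" by measurable
  qed
  define c where "c = real (card {j \<in> {1..n}. x j = x i})"
  have xi: "x i \<in> Lc" using i by simp
  have eq: "sh i (Inner e (clamp (len e) t)) = (if dl (x i) t \<le> mu t then 1 / (cnt t * c) else 0)" for t
  proof -
    let ?p = "Inner e (clamp (len e) t)"
    have iff: "(\<forall>l'\<in>Lc. dl l t \<le> dl l' t) \<longleftrightarrow> dl l t \<le> mu t" for l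
      unfolding mu_def using Lc_ne by (simp add: Min_ge_iff)
    have C: "cl ?p = {l \<in> Lc. dl l t \<le> mu t}"
      unfolding closest_def using iff unfolding dl_def by auto
    have "real (card (cl ?p)) = (\<Sum>l\<in>{l \<in> Lc. dl l t \<le> mu t}. 1)" using C by simp
    also have "\<dots> = cnt t" unfolding cnt_def by (rule sum.inter_filter) simp
    finally have "real (card (cl ?p)) = cnt t" .
    then show ?thesis unfolding share_def c_def using C xi by auto
  qed
  note [measurable] = dlm[OF xi] mum cntm
  have "(\<lambda>t. if dl (x i) t \<le> mu t then 1 / (cnt t * c) else 0) \<in> borel_measurable borel" by measurable
  then show ?thesis using eq by simp
qed

lemma sh_int:
  assumes i: "i \<in> {1..n}" and e: "e \<in> E"
  shows "integrable lborel (\<lambda>t. indicator {0<..<len e} t * sh i (Inner e t))"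
proof -
  have "integrable lborel (\<lambda>t. indicator {0<..<len e} t *\<^sub>R sh i (Inner e (clamp (len e) t)))"
    by (rule integrableI_bounded_set_indicator[where B=1])
       (use sh_meas[OF i e] sh_nonneg sh_le1 edge_ok[OF e] in \<open>auto simp: less_imp_le\<close>)
  moreover have "(\<lambda>t. indicator {0<..<len e} t *\<^sub>R sh i (Inner e (clamp (len e) t))) =
      (\<lambda>t. indicator {0<..<len e} t * sh i (Inner e t))"
  proof
    fix t show "indicator {0<..<len e} t *\<^sub>R sh i (Inner e (clamp (len e) t)) =
      indicator {0<..<len e} t * sh i (Inner e t)"
      by (cases "t \<in> {0<..<len e}") (auto simp: clamp_id)
  qed
  ultimately show ?thesis by simp
qed

lemma lbint_eq: "0 \<le> (L::real) \<Longrightarrow> (LBINT t=0..L. f t) = integral\<^sup>L lborel (\<lambda>t. indicator {0<..<L} t * (f t :: real))"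
  by (simp add: interval_lebesgue_integral_def set_lebesgue_integral_def zero_ereal_def)

lemma payoff_eq: "payoff E src tgt len n x i =
    (\<Sum>e\<in>E. integral\<^sup>L lborel (\<lambda>t. indicator {0<..<len e} t * sh i (Inner e t)))"
  unfolding payoff_def by (rule sum.cong) (use edge_ok in \<open>auto simp: lbint_eq less_imp_le\<close>)

lemma pay_sum: "(\<Sum>i\<in>{1..n}. payoff E src tgt len n x i) = total_length E len"
proof -
  have "(\<Sum>i\<in>{1..n}. payoff E src tgt len n x i) =
      (\<Sum>e\<in>E. \<Sum>i\<in>{1..n}. integral\<^sup>L lborel (\<lambda>t. indicator {0<..<len e} t * sh i (Inner e t)))"
    unfolding payoff_eq by (rule sum.swap)
  also have "\<dots> = (\<Sum>e\<in>E. len e)"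
  proof (rule sum.cong[OF refl])
    fix e assume e: "e \<in> E"
    have "(\<Sum>i\<in>{1..n}. integral\<^sup>L lborel (\<lambda>t. indicator {0<..<len e} t * sh i (Inner e t))) =
        integral\<^sup>L lborel (\<lambda>t. \<Sum>i\<in>{1..n}. indicator {0<..<len e} t * sh i (Inner e t))"
      by (rule Bochner_Integration.integral_sum[where I="{1..n}" and f="\<lambda>i t. indicator {0<..<len e} t * sh i (Inner e t)", symmetric])
         (rule sh_int[OF _ e])
    also have "(\<lambda>t. \<Sum>i\<in>{1..n}. indicator {0<..<len e} t * sh i (Inner e t)) = indicator {0<..<len e}"
      by (rule ext) (simp only: sum_distrib_left[symmetric] sh_sum mult_1_right)
    also have "integral\<^sup>L lborel (indicator {0<..<len e} :: real \<Rightarrow> real) = len e"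
      using edge_ok[OF e] by simp
    finally show "(\<Sum>i\<in>{1..n}. integral\<^sup>L lborel (\<lambda>t. indicator {0<..<len e} t * sh i (Inner e t))) = len e" .
  qed
  finally show ?thesis unfolding total_length_def .
qed

end

lemma int_lb:
  fixes f :: "real \<Rightarrow> real"
  assumes int: "integrable lborel (\<lambda>t. indicator {0<..<L} t * f t)"
    and nn: "\<And>t. 0 \<le> f t" and a: "0 \<le> a" "a + l \<le> L" "0 \<le> l"
    and one: "\<And>t. a < t \<Longrightarrow> t < a + l \<Longrightarrow> f t = 1"
  shows "l \<le> integral\<^sup>L lborel (\<lambda>t. indicator {0<..<L} t * f t)"
proof -
  have "integral\<^sup>L lborel (indicator {a<..<a+l} :: real \<Rightarrow> real) = l" using a by simp
  moreover have "integral\<^sup>L lborel (indicator {a<..<a+l} :: real \<Rightarrow> real)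
      \<le> integral\<^sup>L lborel (\<lambda>t. indicator {0<..<L} t * f t)"
  proof (rule integral_mono)
    show "integrable lborel (indicator {a<..<a+l} :: real \<Rightarrow> real)"
      by (rule integrable_real_indicator) (use a in auto)
    show "integrable lborel (\<lambda>t. indicator {0<..<L} t * f t)" by (rule int)
    fix t :: real
    show "indicator {a<..<a+l} t \<le> indicator {0<..<L} t * f t"
    proof (cases "a < t \<and> t < a + l")
      case True then show ?thesis using one a by (simp add: indicator_def)
    next
      case False
      then have "indicator {a<..<a+l} t = (0::real)" by (simp add: indicator_def)
      moreover have "0 \<le> indicator {0<..<L} t * f t" using nn by simp
      ultimately show ?thesis by simp
    qed
  qed
  ultimately show ?thesis by simp
qed


theorem mainTheorem11:
  fixes V :: "'v set" and E :: "'e set" and src tgt :: "'e \<Rightarrow> 'v" and len :: "'e \<Rightarrow> real"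
    and n :: nat and x :: "nat \<Rightarrow> ('v, 'e) point" and y :: "('v, 'e) point"
  assumes "network V E src tgt len"
    and "n \<ge> 1"
    and "nash_eq V E src tgt len n x"
    and "y \<in> points V E len"
  shows "(MIN i\<in>{1..n}. pdist E src tgt len (x i) y) \<le> 2 * total_length E len / real n"
proof (rule ccontr)
  assume contra: "\<not> ?thesis"
  interpret net V E src tgt len by (rule net.intro) (rule assms(1))
  have xP: "\<And>i. i \<in> {1..n} \<Longrightarrow> x i \<in> points V E len" using assms(3) by (auto simp: nash_eq_def)
  interpret G: game V E src tgt len n x by (rule game.intro, unfold_locales) (use assms(2) xP in auto)
  define Lam where "Lam = total_length E len"
  have Lam0: "0 \<le> Lam" unfolding Lam_def total_length_def using edge_ok
    by (intro sum_nonneg) (simp add: less_imp_le)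
  define r where "r = (MIN i\<in>{1..n}. d (x i) y)"
  have hr: "\<And>j. j \<in> {1..n} \<Longrightarrow> r \<le> d (x j) y" unfolding r_def by (rule Min_le) auto
  have rgt: "2 * Lam / real n < r" using contra unfolding r_def Lam_def by simp
  have npos: "0 < real n" using assms(2) by simp
  have "0 \<le> 2 * Lam / real n" using Lam0 npos by simp
  then have rpos: "0 < r" using rgt by simp
  obtain i where i: "i \<in> {1..n}" "payoff E src tgt len n x i \<le> Lam / real n"
  proof (rule ccontr)
    assume "\<not> thesis"
    then have allgt: "\<And>i. i \<in> {1..n} \<Longrightarrow> Lam / real n < payoff E src tgt len n x i" using that by force
    have "(\<Sum>i\<in>{1..n}. Lam / real n) < (\<Sum>i\<in>{1..n}. payoff E src tgt len n x i)"
      by (rule sum_strict_mono) (use assms(2) allgt in auto)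
    also have "\<dots> = Lam" using G.pay_sum unfolding Lam_def .
    finally show False using npos by simp
  qed
  define x' where "x' = x(i := y)"
  have x'P: "\<And>j. j \<in> {1..n} \<Longrightarrow> x' j \<in> points V E len" using xP assms(4) by (auto simp: x'_def)
  interpret G': game V E src tgt len n x' by (rule game.intro, unfold_locales) (use assms(2) x'P in auto)
  define \<rho> where "\<rho> = r / 2"
  have rho: "0 < \<rho>" using rpos by (simp add: \<rho>_def)
  interpret B: ball V E src tgt len y \<rho> by (rule ball.intro, unfold_locales) (use assms(4) rho in auto)
  have yv: "valid y" by (rule B.yv)
  have xv: "\<And>j. j \<in> {1..n} \<Longrightarrow> valid (x j)" using xP points_valid by blast
  have "2 * \<rho> \<le> d (x i) y" using hr[OF i(1)] by (simp add: \<rho>_def)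
  then obtain F l where F: "F \<subseteq> E" "\<forall>e\<in>F. B.good e (l e)" "\<rho> \<le> (\<Sum>e\<in>F. l e)"
    using B.far[OF xv[OF i(1)]] by blast
  have sh1: "share E src tgt len n x' i p = 1" if vp: "valid p" and dp: "d p y < \<rho>" for p
  proof -
    have farp: "d p y < d p (x k)" if k: "k \<in> {1..n}" "k \<noteq> i" for k
    proof -
      have "d (x k) y \<le> d (x k) p + d p y" by (rule d_tri[OF xv[OF k(1)] vp yv])
      then show ?thesis using hr[OF k(1)] dp d_sym[of "x k" p] by (simp add: \<rho>_def)
    qed
    have x'i: "x' i = y" by (simp add: x'_def)
    have C: "closest E src tgt len n x' p = {y}"
    proof
      show "closest E src tgt len n x' p \<subseteq> {y}"
      proof
        fix l assume l: "l \<in> closest E src tgt len n x' p"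
        then obtain k where k: "k \<in> {1..n}" "l = x' k" unfolding closest_def by auto
        have "d p l \<le> d p (x' i)" using l i(1) unfolding closest_def by auto
        then show "l \<in> {y}" using farp[OF k(1)] k x'i by (cases "k = i") (auto simp: x'_def)
      qed
    next
      have "\<forall>l'\<in>x' ` {1..n}. d p y \<le> d p l'"
      proof
        fix l' assume "l' \<in> x' ` {1..n}"
        then obtain k where k: "k \<in> {1..n}" "l' = x' k" by auto
        then show "d p y \<le> d p l'" using farp[OF k(1)] by (cases "k = i") (auto simp: x'_def less_imp_le)
      qed
      moreover have "y \<in> x' ` {1..n}" using i(1) x'i by force
      ultimately show "{y} \<subseteq> closest E src tgt len n x' p" unfolding closest_def by auto
    qed
    have S: "{j \<in> {1..n}. x' j = x' i} = {i}"
    proof -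
      have "x j \<noteq> y" if "j \<in> {1..n}" for j
      proof
        assume "x j = y"
        then have "d (x j) y = 0" using d_self[OF yv] by simp
        then show False using hr[OF that] rpos by simp
      qed
      then show ?thesis using i(1) by (auto simp: x'_def)
    qed
    have "share E src tgt len n x' i p = (if x' i \<in> {y} then 1 / (real (card {y}) * real (card {i})) else 0)"
      unfolding share_def C S ..
    then show ?thesis using x'i by simp
  qed
  have lbF: "l e \<le> integral\<^sup>L lborel (\<lambda>t. indicator {0<..<len e} t * share E src tgt len n x' i (Inner e t))"
    if e: "e \<in> F" for e
  proof -
    have eE: "e \<in> E" using F(1) e by auto
    obtain a where a: "0 \<le> l e" "0 \<le> a" "a + l e \<le> len e"
      "\<forall>t. a < t \<and> t < a + l e \<longrightarrow> d (Inner e t) y < \<rho>"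
      using F(2) e unfolding B.good_def by blast
    show ?thesis
    proof (rule int_lb[OF G'.sh_int[OF i(1) eE] G'.sh_nonneg a(2,3,1)])
      fix t assume t: "a < t" "t < a + l e"
      have "valid (Inner e t)" using t a eE by (auto simp: valid_def)
      then show "share E src tgt len n x' i (Inner e t) = 1" using sh1 a(4) t by blast
    qed
  qed
  have "\<rho> \<le> (\<Sum>e\<in>F. l e)" by (rule F(3))
  also have "\<dots> \<le> (\<Sum>e\<in>F. integral\<^sup>L lborel (\<lambda>t. indicator {0<..<len e} t * share E src tgt len n x' i (Inner e t)))"
    by (rule sum_mono) (rule lbF)
  also have "\<dots> \<le> (\<Sum>e\<in>E. integral\<^sup>L lborel (\<lambda>t. indicator {0<..<len e} t * share E src tgt len n x' i (Inner e t)))"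
    by (rule sum_mono2[OF finE F(1)]) (auto intro!: integral_nonneg_AE simp: G'.sh_nonneg)
  also have "\<dots> = payoff E src tgt len n x' i" by (rule G'.payoff_eq[symmetric])
  also have "\<dots> \<le> payoff E src tgt len n x i"
    using assms(3) i(1) assms(4) unfolding nash_eq_def x'_def by blast
  also have "\<dots> \<le> Lam / real n" by (rule i(2))
  finally have "\<rho> \<le> Lam / real n" .
  moreover have "Lam / real n < \<rho>" using rgt unfolding \<rho>_def by (simp add: field_simps)
  ultimately show False by simp
qed

end
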